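(* Let $n\geq 2$ and let $R$ be the unital associative ring $\langle x,y \mid x^n=0,\ y^n=0,\ xy+y^{n-1}x^{n-1}=1\rangle$. For $0\leq i,j<n$ put $a_{i,j}=y^ix^j-y^{i+1}x^{j+1}\in R$, and set $a_{i,j}=0$ whenever $i$ or $j$ lies outside $\{0,1,\dots,n-1\}$. Then for all $0\leq i,j<n$: $$a_{i,j}x=a_{i,j+1},\qquad a_{i,j}y=a_{i,j-1},\qquad xa_{i,j}=a_{i-1,j},\qquad ya_{i,j}=a_{i+1,j}.$$
   Context: $R$ denotes the quotient of the free unital associative ring $\mathbb{Z}\langle x,y\rangle$ by the two-sided ideal generated by $x^n$, $y^n$ and $xy+y^{n-1}x^{n-1}-1$; $x^0=y^0=1$. *)

theory Defs
  imports Main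
begin

text \<open>The elements a_{i,j} = y^i x^j - y^{i+1} x^{j+1} for 0 <= i,j < n, and 0 otherwise.
  Indices are integers so that i-1, j-1 may leave the range.\<close>
definition aij :: "nat \<Rightarrow> 'a::ring_1 \<Rightarrow> 'a \<Rightarrow> int \<Rightarrow> int \<Rightarrow> 'a" where
  "aij n x y i j =
     (if 0 \<le> i \<and> i < int n \<and> 0 \<le> j \<and> j < int n
      then y ^ nat i * x ^ nat j - y ^ (nat i + 1) * x ^ (nat j + 1)
      else 0)"

end

theory Submission
  imports Defs
begin

lemma pw_split: "(z::'a::ring_1) ^ (Suc m) = z * z ^ m" "(z::'a::ring_1) ^ (Suc m) = z ^ m * z"
  by (simp_all add: power_commutes)

lemma repr:
  fixes x y :: "'a::ring_1"
  shows "y ^ i * x ^ j - y ^ (i + 1) * x ^ (j + 1) = y ^ i * (1 - y * x) * x ^ j"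
proof -
  have "y ^ (i + 1) * x ^ (j + 1) = y ^ i * (y * x) * x ^ j"
    by (simp only: Suc_eq_plus1[symmetric] power_Suc2[of y] power_Suc[of x] mult.assoc)
  then show ?thesis by (simp add: algebra_simps)
qed

definition P :: "'a::ring_1 \<Rightarrow> 'a \<Rightarrow> nat \<Rightarrow> nat \<Rightarrow> 'a" where
  "P x y i j = y ^ i * (1 - y * x) * x ^ j"

locale rel =
  fixes x y :: "'a::ring_1" and m :: nat
  assumes m1: "m \<ge> 1" and xn: "x ^ Suc m = 0" and yn: "y ^ Suc m = 0"
    and r: "x * y + y ^ m * x ^ m = 1"
begin

lemma xy: "x * y = 1 - y ^ m * x ^ m" using r by (simp add: algebra_simps eq_diff_eq)

lemma fy: "(1 - y * x) * y = 0"
proof -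
  have "(1 - y * x) * y = y - y * (x * y)" by (simp add: algebra_simps)
  also have "\<dots> = y ^ Suc m * x ^ m" by (simp add: xy algebra_simps mult.assoc)
  finally show ?thesis using yn by simp
qed

lemma xf: "x * (1 - y * x) = 0"
proof -
  have "x * (1 - y * x) = x - (x * y) * x" by (simp add: algebra_simps)
  also have "\<dots> = y ^ m * (x ^ m * x)" by (simp add: xy algebra_simps mult.assoc)
  also have "x ^ m * x = x ^ Suc m" by (simp add: power_commutes)
  finally show ?thesis using xn by simp
qed

lemma A: "k < l \<Longrightarrow> (1 - y * x) * x ^ k * y ^ l = 0"
proof (induction k arbitrary: l)
  case 0
  then obtain l' where l: "l = Suc l'" by (cases l) auto
  show ?case using fy by (simp add: l mult.assoc[symmetric])
next
  case (Suc k)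
  show ?case
  proof (cases "l \<le> m")
    case False
    hence "y ^ l = 0" using yn
      by (metis not_less_eq_eq power_0_left power_add le_add_diff_inverse mult_zero_left zero_less_Suc power_eq_0_iff)
    then show ?thesis by simp
  next
    case True
    from Suc obtain l' where l: "l = Suc l'" by (cases l) auto
    have e: "x ^ Suc k * y ^ Suc l' = x ^ k * y ^ l' - (x ^ k * y ^ m) * (x ^ m * y ^ l')"
    proof -
      have "x ^ Suc k * y ^ Suc l' = x ^ k * (x * y) * y ^ l'"
        by (simp only: power_Suc2[of x] power_Suc[of y] mult.assoc)
      also have "\<dots> = x ^ k * y ^ l' - (x ^ k * y ^ m) * (x ^ m * y ^ l')"
        by (simp add: xy algebra_simps mult.assoc)
      finally show ?thesis .
    qed
    have 1: "(1 - y * x) * x ^ k * y ^ l' = 0" using Suc l by simp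
    have 2: "(1 - y * x) * x ^ k * y ^ m = 0" using Suc l True by simp
    have "(1 - y * x) * x ^ Suc k * y ^ l =
        (1 - y * x) * x ^ k * y ^ l' - ((1 - y * x) * x ^ k * y ^ m) * (x ^ m * y ^ l')"
      unfolding l mult.assoc e by (simp only: right_diff_distrib mult.assoc)
    then show ?thesis using 1 2 by simp
  qed
qed

lemma B: "k < l \<Longrightarrow> x ^ l * y ^ k * (1 - y * x) = 0"
proof (induction k arbitrary: l)
  case 0
  then obtain l' where l: "l = Suc l'" by (cases l) auto
  have "x ^ l * y ^ 0 * (1 - y * x) = x ^ l' * (x * (1 - y * x))"
    by (simp only: l power_Suc2 mult.assoc power_0 mult_1_right)
  then show ?case using xf by simp
next
  case (Suc k)
  show ?case
  proof (cases "l \<le> m")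
    case False
    hence "x ^ l = 0" using xn
      by (metis not_less_eq_eq power_0_left power_add le_add_diff_inverse mult_zero_left zero_less_Suc power_eq_0_iff)
    then show ?thesis by simp
  next
    case True
    from Suc obtain l' where l: "l = Suc l'" by (cases l) auto
    have e: "x ^ Suc l' * y ^ Suc k = x ^ l' * y ^ k - (x ^ l' * y ^ m) * (x ^ m * y ^ k)"
    proof -
      have "x ^ Suc l' * y ^ Suc k = x ^ l' * (x * y) * y ^ k"
        by (simp only: power_Suc2[of x] power_Suc[of y] mult.assoc)
      also have "\<dots> = x ^ l' * y ^ k - (x ^ l' * y ^ m) * (x ^ m * y ^ k)"
        by (simp add: xy algebra_simps mult.assoc)
      finally show ?thesis .
    qed
    have 1: "x ^ l' * y ^ k * (1 - y * x) = 0" using Suc l by simp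
    have 2: "x ^ m * y ^ k * (1 - y * x) = 0" using Suc l True by simp
    have "x ^ l * y ^ Suc k * (1 - y * x) =
        x ^ l' * y ^ k * (1 - y * x) - (x ^ l' * y ^ m) * (x ^ m * y ^ k * (1 - y * x))"
      unfolding l e by (simp add: mult.assoc left_diff_distrib)
    then show ?thesis using 1 2 by simp
  qed
qed


lemma Px: "P x y i j * x = (if Suc j \<le> m then P x y i (Suc j) else 0)" if "j \<le> m"
proof -
  have "P x y i j * x = y ^ i * (1 - y * x) * x ^ Suc j"
    unfolding P_def by (simp only: power_Suc2[of x] mult.assoc)
  moreover have "\<not> Suc j \<le> m \<Longrightarrow> x ^ Suc j = 0" using that xn
    by (metis le_antisym not_less_eq_eq)
  ultimately show ?thesis by (auto simp: P_def simp del: power_Suc)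
qed

lemma yP: "y * P x y i j = (if Suc i \<le> m then P x y (Suc i) j else 0)" if "i \<le> m"
proof -
  have "y * P x y i j = y ^ Suc i * (1 - y * x) * x ^ j"
    unfolding P_def by (simp only: power_Suc[of y] mult.assoc)
  moreover have "\<not> Suc i \<le> m \<Longrightarrow> y ^ Suc i = 0" using that yn
    by (metis le_antisym not_less_eq_eq)
  ultimately show ?thesis by (auto simp: P_def simp del: power_Suc)
qed

lemma Py: "P x y i j * y = (if j = 0 then 0 else P x y i (j - 1))" if "j \<le> m"
proof (cases j)
  case 0
  have "P x y i j * y = y ^ i * ((1 - y * x) * y)" unfolding P_def 0 by (simp add: mult.assoc)
  then show ?thesis using fy 0 by simp
next
  case (Suc j')
  have e: "x ^ Suc j' * y = x ^ j' - x ^ j' * y ^ m * x ^ m"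
  proof -
    have "x ^ Suc j' * y = x ^ j' * (x * y)" by (simp only: power_Suc2[of x] mult.assoc)
    also have "\<dots> = x ^ j' - x ^ j' * y ^ m * x ^ m" by (simp add: xy algebra_simps mult.assoc)
    finally show ?thesis .
  qed
  have z: "(1 - y * x) * x ^ j' * y ^ m = 0" using A Suc that by simp
  have "P x y i j * y = y ^ i * ((1 - y * x) * (x ^ Suc j' * y))" unfolding P_def Suc by (simp only: mult.assoc)
  also have "\<dots> = y ^ i * ((1 - y * x) * x ^ j') - y ^ i * (((1 - y * x) * x ^ j' * y ^ m) * x ^ m)"
    unfolding e by (simp add: algebra_simps)
  also have "\<dots> = P x y i j'" using z by (simp add: P_def mult.assoc)
  finally show ?thesis using Suc by simp
qed

lemma xP: "x * P x y i j = (if i = 0 then 0 else P x y (i - 1) j)" if "i \<le> m"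
proof (cases i)
  case 0
  have "x * P x y i j = (x * (1 - y * x)) * x ^ j" unfolding P_def 0 by (simp add: mult.assoc)
  then show ?thesis using xf 0 by simp
next
  case (Suc i')
  have e: "x * y ^ Suc i' = y ^ i' - y ^ m * x ^ m * y ^ i'"
  proof -
    have "x * y ^ Suc i' = (x * y) * y ^ i'" by (simp only: power_Suc[of y] mult.assoc)
    also have "\<dots> = y ^ i' - y ^ m * x ^ m * y ^ i'" by (simp add: xy algebra_simps mult.assoc)
    finally show ?thesis .
  qed
  have z: "x ^ m * y ^ i' * (1 - y * x) = 0" using B Suc that by simp
  have "x * P x y i j = ((x * y ^ Suc i') * (1 - y * x)) * x ^ j" unfolding P_def Suc by (simp only: mult.assoc)
  also have "\<dots> = (y ^ i' * (1 - y * x)) * x ^ j - (y ^ m * (x ^ m * y ^ i' * (1 - y * x))) * x ^ j"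
    unfolding e by (simp add: algebra_simps)
  also have "\<dots> = P x y i' j" using z by (simp add: P_def mult.assoc)
  finally show ?thesis using Suc by simp
qed

end

lemma aij_P:
  fixes x y :: "'a::ring_1"
  shows "aij n x y i j = (if 0 \<le> i \<and> i < int n \<and> 0 \<le> j \<and> j < int n
     then P x y (nat i) (nat j) else 0)"
  unfolding aij_def P_def repr by simp

theorem lemma3:
  fixes x y :: "'a::ring_1" and n :: nat
  assumes "n \<ge> 2"
    and "x ^ n = 0" and "y ^ n = 0"
    and "x * y + y ^ (n - 1) * x ^ (n - 1) = 1"
    and "i < n" and "j < n"
  shows "aij n x y (int i) (int j) * x = aij n x y (int i) (int j + 1)
       \<and> aij n x y (int i) (int j) * y = aij n x y (int i) (int j - 1)
       \<and> x * aij n x y (int i) (int j) = aij n x y (int i - 1) (int j)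
       \<and> y * aij n x y (int i) (int j) = aij n x y (int i + 1) (int j)"
proof -
  define m where "m = n - 1"
  have n: "n = Suc m" using assms(1) unfolding m_def by simp
  interpret rel x y m using assms unfolding n by unfold_locales auto
  have i: "i \<le> m" and j: "j \<le> m" using assms(5,6) n by auto
  have a: "aij n x y (int i) (int j) = P x y i j" using assms(5,6) by (simp add: aij_P)
  have s: "\<And>k::nat. nat (int k + 1) = Suc k" by simp
  show ?thesis unfolding a
    using Px[OF j, of i] Py[OF j, of i] xP[OF i, of j] yP[OF i, of j] i j
    by (auto simp: aij_P n nat_diff_distrib s)
qed

end
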